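(* Under the standing setup, define $$D^+_{MOB}=\frac{\mathbb E[\min\{Y_N-\underline Y(1-X_N),\,\overline Y X_N\}]-\mathbb E[X]\,\mathbb E[Y]}{\mathrm{Var}(X)},\qquad D^-_{MOB}=\frac{\mathbb E[Y](1-\mathbb E[X])-\mathbb E[\min\{Y_N-\underline Y X_N,\,\overline Y(1-X_N)\}]}{\mathrm{Var}(X)}.$$ Then $D\in[D^-_{MOB},D^+_{MOB}]$, and this bound is sharp (absent additional information).
   Context: Let $(X,Y,N)$ be a random triple with $X\in\{0,1\}$, $Y$ real-valued, $N$ taking values in a finite set $\mathcal N$. Write $p_n=\Pr(N=n)$, $X_n=\mathbb E[X\mid N=n]$, $Y_n=\mathbb E[Y\mid N=n]$, $X_N=\mathbb E[X\mid N]$, $Y_N=\mathbb E[Y\mid N]$. Assume some $n$ has $p_n>0$ and $X_n\in(0,1)$. Fix reals $\underline Y\le\overline Y$ and assume $\mathbb E[Y\mid X=x,N=n]\in[\underline Y,\overline Y]$ whenever $\Pr(X=x,N=n)>0$. $D=\mathbb E[Y\mid X=1]-\mathbb E[Y\mid X=0]$. Observed data: $(p_n,X_n,Y_n)_n$. Sharpness: the parameter lies in the interval for every joint distribution satisfying the standing assumptions, and every value in the interval is attained by some joint distribution of $(X,Y,N)$ with the same observed data satisfying the standing bound. *)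

theory Defs
  imports "HOL-Probability.Probability"
begin

text \<open>A random triple (X,Y,N) is represented by its joint law: a probability
measure on real \<times> real \<times> 'n, with X, Y, N the coordinate projections.\<close>

definition tX :: "real \<times> real \<times> 'n \<Rightarrow> real" where "tX \<omega> = fst \<omega>"
definition tY :: "real \<times> real \<times> 'n \<Rightarrow> real" where "tY \<omega> = fst (snd \<omega>)"
definition tN :: "real \<times> real \<times> 'n \<Rightarrow> 'n" where "tN \<omega> = snd (snd \<omega>)"

definition cond_ev :: "'a measure \<Rightarrow> ('a \<Rightarrow> real) \<Rightarrow> 'a set \<Rightarrow> real" where
  "cond_ev M f A = (LINT \<omega>:A|M. f \<omega>) / measure M A"

definition pN :: "(real \<times> real \<times> 'n) measure \<Rightarrow> 'n \<Rightarrow> real" where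
  "pN P n = measure P {\<omega>. tN \<omega> = n}"
definition XN :: "(real \<times> real \<times> 'n) measure \<Rightarrow> 'n \<Rightarrow> real" where
  "XN P n = cond_ev P tX {\<omega>. tN \<omega> = n}"
definition YN :: "(real \<times> real \<times> 'n) measure \<Rightarrow> 'n \<Rightarrow> real" where
  "YN P n = cond_ev P tY {\<omega>. tN \<omega> = n}"

definition same_obs :: "(real \<times> real \<times> 'n) measure \<Rightarrow> (real \<times> real \<times> 'n) measure \<Rightarrow> bool" where
  "same_obs P Q \<longleftrightarrow> (\<forall>n. pN P n = pN Q n \<and> XN P n = XN Q n \<and> YN P n = YN Q n)"

definition valid_triple :: "(real \<times> real \<times> 'n::finite) measure \<Rightarrow> real \<Rightarrow> real \<Rightarrow> bool" where
  "valid_triple P lo hi \<longleftrightarrow>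
     prob_space P \<and>
     sets P = sets (borel \<Otimes>\<^sub>M (borel \<Otimes>\<^sub>M count_space UNIV)) \<and>
     (AE \<omega> in P. tX \<omega> \<in> {0, 1}) \<and>
     integrable P tY \<and>
     (\<forall>x\<in>{0::real, 1}. \<forall>n.
        measure P {\<omega>. tX \<omega> = x \<and> tN \<omega> = n} > 0 \<longrightarrow>
        cond_ev P tY {\<omega>. tX \<omega> = x \<and> tN \<omega> = n} \<in> {lo..hi})"

definition Dpar :: "(real \<times> real \<times> 'n) measure \<Rightarrow> real" where
  "Dpar P = cond_ev P tY {\<omega>. tX \<omega> = 1} - cond_ev P tY {\<omega>. tX \<omega> = 0}"

definition var_X :: "(real \<times> real \<times> 'n) measure \<Rightarrow> real" where
  "var_X P = (\<integral>\<omega>. (tX \<omega> - (\<integral>\<omega>'. tX \<omega>' \<partial>P))\<^sup>2 \<partial>P)"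

definition D_MOB_plus :: "(real \<times> real \<times> 'n) measure \<Rightarrow> real \<Rightarrow> real \<Rightarrow> real" where
  "D_MOB_plus P lo hi =
     ((\<integral>\<omega>. min (YN P (tN \<omega>) - lo * (1 - XN P (tN \<omega>))) (hi * XN P (tN \<omega>)) \<partial>P)
       - (\<integral>\<omega>. tX \<omega> \<partial>P) * (\<integral>\<omega>. tY \<omega> \<partial>P)) / var_X P"

definition D_MOB_minus :: "(real \<times> real \<times> 'n) measure \<Rightarrow> real \<Rightarrow> real \<Rightarrow> real" where
  "D_MOB_minus P lo hi =
     ((\<integral>\<omega>. tY \<omega> \<partial>P) * (1 - (\<integral>\<omega>. tX \<omega> \<partial>P))
       - (\<integral>\<omega>. min (YN P (tN \<omega>) - lo * XN P (tN \<omega>)) (hi * (1 - XN P (tN \<omega>))) \<partial>P))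
     / var_X P"

end

theory Submission
  imports Defs
begin


abbreviation "M0 \<equiv> (borel \<Otimes>\<^sub>M (borel \<Otimes>\<^sub>M count_space UNIV)) :: (real \<times> real \<times> 'n) measure"

definition Cs :: "'n \<Rightarrow> (real \<times> real \<times> 'n) set" where "Cs n = {\<omega>. tN \<omega> = n}"
definition As :: "real \<Rightarrow> 'n \<Rightarrow> (real \<times> real \<times> 'n) set" where
  "As x n = {\<omega>. tX \<omega> = x \<and> tN \<omega> = n}"

lemma space_M0: "space M0 = UNIV" by (simp add: space_pair_measure)

lemma tX_meas[measurable]: "tX \<in> borel_measurable M0"
  unfolding tX_def[abs_def] by measurable
lemma tY_meas[measurable]: "tY \<in> borel_measurable M0"
  unfolding tY_def[abs_def] by measurable
lemma tN_meas[measurable]: "tN \<in> measurable M0 (count_space UNIV)"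
  unfolding tN_def[abs_def] by measurable

lemma F_tN_meas: "(\<lambda>\<omega>. F (tN \<omega>) :: real) \<in> borel_measurable M0"
  by (rule measurable_compose[OF tN_meas]) simp

lemma Cs_sets: "Cs n \<in> sets M0"
proof -
  have "Cs n = tN -` {n} \<inter> space M0" by (auto simp: Cs_def space_M0)
  thus ?thesis using measurable_sets[OF tN_meas] by simp
qed

lemma Xeq_sets: "{\<omega>. tX \<omega> = x} \<in> sets M0"
proof -
  have "{\<omega>. tX \<omega> = x} = tX -` {x} \<inter> space M0" by (auto simp: space_M0)
  moreover have "{x} \<in> sets (borel::real measure)" by (simp add: borel_closed)
  ultimately show ?thesis using measurable_sets[OF tX_meas, of "{x}"] by metis
qed

lemma As_sets: "As x n \<in> sets M0"
proof -
  have "As x n = {\<omega>. tX \<omega> = x} \<inter> Cs n" by (auto simp: As_def Cs_def)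
  thus ?thesis using Xeq_sets[of x] Cs_sets[of n] by (metis sets.Int)
qed

definition Q1s :: "(real \<times> real \<times> 'n) set" where "Q1s = {\<omega>. tX \<omega> = 1}"
definition Q0s :: "(real \<times> real \<times> 'n) set" where "Q0s = {\<omega>. tX \<omega> = 0}"

lemma sumC2: fixes \<omega> :: "real \<times> real \<times> 'n::finite"
  shows "(\<Sum>n\<in>UNIV. indicator (Cs n) \<omega> * F n :: real) = F (tN \<omega>)"
proof -
  have "(\<Sum>n\<in>UNIV. indicator (Cs n) \<omega> * F n :: real) = (\<Sum>n\<in>UNIV. if n = tN \<omega> then F n else 0)"
    by (rule sum.cong) (auto simp: Cs_def)
  thus ?thesis by (simp add: sum.delta)
qed

lemma sumC: fixes \<omega> :: "real \<times> real \<times> 'n::finite"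
  shows "(\<Sum>n\<in>UNIV. indicator (Cs n) \<omega> :: real) = 1"
  using sumC2[of \<omega> "\<lambda>_. 1"] by simp

lemma ind_split_pt: fixes \<omega> :: "real \<times> real \<times> 'n::finite"
  shows "indicator S \<omega> * g \<omega> = (\<Sum>n\<in>UNIV. indicator (S \<inter> Cs n) \<omega> * (g \<omega>::real))"
proof -
  have "indicator S \<omega> * g \<omega> = (\<Sum>n\<in>UNIV. indicator (Cs n) \<omega>) * (indicator S \<omega> * g \<omega>)"
    by (simp add: sumC)
  also have "\<dots> = (\<Sum>n\<in>UNIV. indicator (S \<inter> Cs n) \<omega> * (g \<omega>::real))"
    unfolding sum_distrib_right by (simp add: indicator_inter_arith mult_ac)
  finally show ?thesis .
qed

context
  fixes P :: "(real \<times> real \<times> 'n::finite) measure" and lo hi :: real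
  assumes V: "valid_triple P lo hi"
begin

lemma PS: "prob_space P" using V by (simp add: valid_triple_def)

interpretation PP: prob_space P by (rule PS)

lemma sets_P: "sets P = sets M0" using V by (simp add: valid_triple_def)
lemma space_P: "space P = UNIV" using sets_eq_imp_space_eq[OF sets_P] space_M0 by simp
lemma AE01: "AE \<omega> in P. tX \<omega> \<in> {0,1}" using V by (simp add: valid_triple_def)
lemma intY: "integrable P tY" using V by (simp add: valid_triple_def)

lemma tXP[measurable]: "tX \<in> borel_measurable P"
  using tX_meas measurable_cong_sets[OF sets_P refl] by blast
lemma tYP[measurable]: "tY \<in> borel_measurable P"
  using tY_meas measurable_cong_sets[OF sets_P refl] by blast
lemma tNP[measurable]: "tN \<in> measurable P (count_space UNIV)"
  using tN_meas measurable_cong_sets[OF sets_P refl] by blast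
lemma FNP[measurable]: "(\<lambda>\<omega>. F (tN \<omega>) :: real) \<in> borel_measurable P"
  using F_tN_meas measurable_cong_sets[OF sets_P refl] by blast
lemma CsP[measurable]: "Cs n \<in> sets P" unfolding sets_P by (rule Cs_sets)
lemma AsP[measurable]: "As x n \<in> sets P" unfolding sets_P by (rule As_sets)
lemma Q1P[measurable]: "Q1s \<in> sets P" unfolding sets_P Q1s_def by (rule Xeq_sets)
lemma Q0P[measurable]: "Q0s \<in> sets P" unfolding sets_P Q0s_def by (rule Xeq_sets)

lemma intX: "integrable P tX"
  by (rule PP.integrable_const_bound[where B=1]) (use AE01 in auto)

lemma intF: "integrable P (\<lambda>\<omega>. F (tN \<omega>) :: real)"
  by (rule PP.integrable_const_bound[where B="\<Sum>n\<in>UNIV. \<bar>F n\<bar>"])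
     (auto intro!: member_le_sum)

lemma intInd: "A \<in> sets P \<Longrightarrow> integrable P g \<Longrightarrow> integrable P (\<lambda>\<omega>. indicator A \<omega> * (g \<omega>::real))"
  using integrable_real_mult_indicator[of A P g] by (simp add: mult.commute)

lemma meas_int: "A \<in> sets P \<Longrightarrow> measure P A = (LINT \<omega>:A|P. 1)"
  by (simp add: set_lebesgue_integral_def space_P)

lemma int_UNIV: "integral\<^sup>L P f = (LINT \<omega>:UNIV|P. f \<omega>)"
  by (simp add: set_lebesgue_integral_def)

lemma null_int: assumes "A \<in> sets P" "measure P A = 0"
  shows "(LINT \<omega>:A|P. g \<omega>) = (0::real)"
proof -
  have "emeasure P A = 0" using assms(2) PP.emeasure_eq_measure[of A] by simp
  hence "A \<in> null_sets P" using assms(1) by (rule null_setsI)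
  hence "AE \<omega> in P. \<omega> \<notin> A" by (rule AE_not_in)
  hence "AE \<omega> in P. indicator A \<omega> *\<^sub>R g \<omega> = 0" by (rule AE_mp) (simp add: indicator_def)
  thus ?thesis unfolding set_lebesgue_integral_def by (rule integral_eq_zero_AE)
qed

lemma split_sum: assumes "S \<in> sets P" "integrable P g"
  shows "(LINT \<omega>:S|P. g \<omega>) = (\<Sum>n\<in>UNIV. LINT \<omega>:(S \<inter> Cs n)|P. (g \<omega>::real))"
proof -
  have "(LINT \<omega>:S|P. g \<omega>) = (\<integral>\<omega>. (\<Sum>n\<in>UNIV. indicator (S \<inter> Cs n) \<omega> * g \<omega>) \<partial>P)"
    unfolding set_lebesgue_integral_def real_scaleR_def
    by (rule Bochner_Integration.integral_cong[OF refl]) (rule ind_split_pt)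
  also have "\<dots> = (\<Sum>n\<in>UNIV. \<integral>\<omega>. indicator (S \<inter> Cs n) \<omega> * g \<omega> \<partial>P)"
    by (rule Bochner_Integration.integral_sum) (use assms in \<open>auto intro!: intInd\<close>)
  finally show ?thesis by (simp add: set_lebesgue_integral_def)
qed

lemma split_X: assumes "S \<in> sets P" "integrable P g"
  shows "(LINT \<omega>:S|P. g \<omega>) = (LINT \<omega>:(S \<inter> Q1s)|P. g \<omega>) + (LINT \<omega>:(S \<inter> Q0s)|P. (g \<omega>::real))"
proof -
  have m: "S \<inter> Q1s \<in> sets P" "S \<inter> Q0s \<in> sets P" using assms by auto
  have "(LINT \<omega>:S|P. g \<omega>) = (\<integral>\<omega>. indicator (S \<inter> Q1s) \<omega> * g \<omega> + indicator (S \<inter> Q0s) \<omega> * g \<omega> \<partial>P)"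
    unfolding set_lebesgue_integral_def
    apply (rule integral_cong_AE)
    using assms m apply measurable
    using AE01 apply eventually_elim
    by (auto simp: Q1s_def Q0s_def indicator_def)
  also have "\<dots> = (\<integral>\<omega>. indicator (S \<inter> Q1s) \<omega> * g \<omega> \<partial>P) + (\<integral>\<omega>. indicator (S \<inter> Q0s) \<omega> * g \<omega> \<partial>P)"
    using Bochner_Integration.integral_add[OF intInd[OF m(1) assms(2)] intInd[OF m(2) assms(2)]] .
  finally show ?thesis by (simp add: set_lebesgue_integral_def)
qed


lemma sq01: assumes "x \<in> {0,1}" shows "(x - q)^2 = (1 - 2*q) * x + (q::real)^2"
proof -
  have "x = 0 \<or> x = 1" using assms by simp
  thus ?thesis
  proof
    assume "x = 0" thus ?thesis by (simp add: power2_eq_square)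
  next
    assume "x = 1" thus ?thesis by (simp add: power2_eq_square algebra_simps)
  qed
qed

lemma UP: "UNIV \<in> sets P" using sets.top[of P] space_P by simp

lemma As_eqs: "Cs n \<inter> Q1s = As 1 n" "Cs n \<inter> Q0s = As 0 n" "Q1s \<inter> Cs n = As 1 n" "Q0s \<inter> Cs n = As 0 n"
  by (auto simp: Cs_def Q1s_def Q0s_def As_def)

lemma set_const: "A \<in> sets P \<Longrightarrow> (LINT \<omega>:A|P. c) = c * measure P (A::(real \<times> real \<times> 'n) set)"
  unfolding set_lebesgue_integral_def by (simp add: space_P)

lemma i1: "integrable P (\<lambda>\<omega>. 1::real)" by simp

lemma F3: "measure P (Cs n) = measure P (As 1 n) + measure P (As 0 n)"
proof -
  have "measure P (Cs n) = (LINT \<omega>:Cs n|P. 1)" by (rule meas_int[OF CsP])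
  also have "\<dots> = (LINT \<omega>:(Cs n \<inter> Q1s)|P. 1) + (LINT \<omega>:(Cs n \<inter> Q0s)|P. 1)"
    using split_X[OF CsP i1] .
  also have "\<dots> = measure P (As 1 n) + measure P (As 0 n)"
    by (simp only: As_eqs set_const[OF AsP] mult_1)
  finally show ?thesis .
qed

lemma F1: "measure P (Cs n) * XN P n = measure P (As 1 n)"
proof -
  have "(LINT \<omega>:Cs n|P. tX \<omega>) = (LINT \<omega>:As 1 n|P. tX \<omega>) + (LINT \<omega>:As 0 n|P. tX \<omega>)"
    using split_X[OF CsP intX] unfolding As_eqs .
  also have "(LINT \<omega>:As 1 n|P. tX \<omega>) = measure P (As 1 n)"
  proof -
    have "(LINT \<omega>:As 1 n|P. tX \<omega>) = (LINT \<omega>:As 1 n|P. 1)"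
      by (rule set_lebesgue_integral_cong[OF AsP]) (auto simp: As_def)
    also have "\<dots> = measure P (As 1 n)" by (simp only: set_const[OF AsP] mult_1)
    finally show ?thesis .
  qed
  also have "(LINT \<omega>:As 0 n|P. tX \<omega>) = 0"
  proof -
    have "(LINT \<omega>:As 0 n|P. tX \<omega>) = (LINT \<omega>:As 0 n|P. 0)"
      by (rule set_lebesgue_integral_cong[OF AsP]) (auto simp: As_def)
    also have "\<dots> = 0" by (rule set_lebesgue_integral_zero)
    finally show ?thesis .
  qed
  finally have e: "(LINT \<omega>:Cs n|P. tX \<omega>) = measure P (As 1 n)" by simp
  show ?thesis
  proof (cases "measure P (Cs n) = 0")
    case True
    hence "measure P (As 1 n) = 0" using F3[of n] measure_nonneg[of P "As 1 n"] measure_nonneg[of P "As 0 n"] by linarith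
    then show ?thesis using True by simp
  next
    case False
    then show ?thesis by (simp add: XN_def cond_ev_def e Cs_def[symmetric])
  qed
qed

lemma F9: assumes "x \<in> {0,1}"
  shows "lo * measure P (As x n) \<le> (LINT \<omega>:As x n|P. tY \<omega>) \<and> (LINT \<omega>:As x n|P. tY \<omega>) \<le> hi * measure P (As x n)"
proof (cases "measure P (As x n) = 0")
  case True
  then show ?thesis using null_int[of "As x n" tY] by simp
next
  case False
  hence pos: "measure P (As x n) > 0" using measure_nonneg[of P "As x n"] by linarith
  hence "cond_ev P tY (As x n) \<in> {lo..hi}" using V assms unfolding valid_triple_def As_def by blast
  then show ?thesis using pos by (simp add: cond_ev_def field_simps)
qed

lemma F2: "measure P (Cs n) * YN P n = (LINT \<omega>:As 1 n|P. tY \<omega>) + (LINT \<omega>:As 0 n|P. tY \<omega>)"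
proof -
  have e: "(LINT \<omega>:Cs n|P. tY \<omega>) = (LINT \<omega>:As 1 n|P. tY \<omega>) + (LINT \<omega>:As 0 n|P. tY \<omega>)"
    using split_X[OF CsP intY] unfolding As_eqs .
  show ?thesis
  proof (cases "measure P (Cs n) = 0")
    case True
    hence "measure P (As 1 n) = 0" "measure P (As 0 n) = 0"
      using F3[of n] measure_nonneg[of P "As 1 n"] measure_nonneg[of P "As 0 n"] by linarith+
    then show ?thesis using True null_int[of "As 1 n" tY] null_int[of "As 0 n" tY] by simp
  next
    case False
    then show ?thesis by (simp add: YN_def cond_ev_def e[symmetric] Cs_def[symmetric])
  qed
qed

lemma F7: "(\<integral>\<omega>. F (tN \<omega>) \<partial>P) = (\<Sum>n\<in>UNIV. measure P (Cs n) * F n)"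
proof -
  have "(\<integral>\<omega>. F (tN \<omega>) \<partial>P) = (\<Sum>n\<in>UNIV. LINT \<omega>:(UNIV \<inter> Cs n)|P. F (tN \<omega>))"
    unfolding int_UNIV[of "\<lambda>\<omega>. F (tN \<omega>)"] by (rule split_sum[OF UP intF])
  also have "\<dots> = (\<Sum>n\<in>UNIV. LINT \<omega>:Cs n|P. F n)"
    by (rule sum.cong[OF refl], simp, rule set_lebesgue_integral_cong[OF CsP], simp add: Cs_def)
  also have "\<dots> = (\<Sum>n\<in>UNIV. measure P (Cs n) * F n)"
    by (simp add: set_const mult.commute)
  finally show ?thesis .
qed

lemma sumP: "(\<Sum>n\<in>UNIV. measure P (Cs n)) = 1"
  using F7[of "\<lambda>_. 1"] by (simp add: PP.prob_space)

lemma G1: "measure P Q1s = (\<Sum>n\<in>UNIV. measure P (As 1 n))"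
  unfolding meas_int[OF Q1P] split_sum[OF Q1P i1] As_eqs meas_int[OF AsP] ..

lemma G0: "measure P Q0s = (\<Sum>n\<in>UNIV. measure P (As 0 n))"
  unfolding meas_int[OF Q0P] split_sum[OF Q0P i1] As_eqs meas_int[OF AsP] ..

lemma G1': "(LINT \<omega>:Q1s|P. tY \<omega>) = (\<Sum>n\<in>UNIV. LINT \<omega>:As 1 n|P. tY \<omega>)"
  unfolding split_sum[OF Q1P intY] As_eqs ..

lemma G0': "(LINT \<omega>:Q0s|P. tY \<omega>) = (\<Sum>n\<in>UNIV. LINT \<omega>:As 0 n|P. tY \<omega>)"
  unfolding split_sum[OF Q0P intY] As_eqs ..

lemma Dpar_eq: "Dpar P = (\<Sum>n\<in>UNIV. LINT \<omega>:As 1 n|P. tY \<omega>) / (\<Sum>n\<in>UNIV. measure P (As 1 n))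
   - (\<Sum>n\<in>UNIV. LINT \<omega>:As 0 n|P. tY \<omega>) / (\<Sum>n\<in>UNIV. measure P (As 0 n))"
  unfolding Dpar_def cond_ev_def Q1s_def[symmetric] Q0s_def[symmetric] G1 G0 G1' G0' ..

lemma F4: "(\<integral>\<omega>. tX \<omega> \<partial>P) = (\<Sum>n\<in>UNIV. measure P (As 1 n))"
proof -
  have "(\<integral>\<omega>. tX \<omega> \<partial>P) = (LINT \<omega>:Q1s|P. tX \<omega>) + (LINT \<omega>:Q0s|P. tX \<omega>)"
    unfolding int_UNIV[of tX] using split_X[OF UP intX] by simp
  also have "(LINT \<omega>:Q1s|P. tX \<omega>) = measure P Q1s"
  proof -
    have "(LINT \<omega>:Q1s|P. tX \<omega>) = (LINT \<omega>:Q1s|P. 1)"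
      by (rule set_lebesgue_integral_cong[OF Q1P]) (auto simp: Q1s_def)
    also have "\<dots> = measure P Q1s" by (simp only: set_const[OF Q1P] mult_1)
    finally show ?thesis .
  qed
  also have "(LINT \<omega>:Q0s|P. tX \<omega>) = 0"
  proof -
    have "(LINT \<omega>:Q0s|P. tX \<omega>) = (LINT \<omega>:Q0s|P. 0)"
      by (rule set_lebesgue_integral_cong[OF Q0P]) (auto simp: Q0s_def)
    also have "\<dots> = 0" by (rule set_lebesgue_integral_zero)
    finally show ?thesis .
  qed
  finally show ?thesis using G1 by simp
qed

lemma F5: "(\<integral>\<omega>. tY \<omega> \<partial>P) = (\<Sum>n\<in>UNIV. LINT \<omega>:As 1 n|P. tY \<omega>) + (\<Sum>n\<in>UNIV. LINT \<omega>:As 0 n|P. tY \<omega>)"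
  unfolding int_UNIV[of tY] using split_X[OF UP intY] G1' G0' by simp

lemma F6: "var_X P = (\<integral>\<omega>. tX \<omega> \<partial>P) - (\<integral>\<omega>. tX \<omega> \<partial>P)^2"
proof -
  define q where "q = (\<integral>\<omega>. tX \<omega> \<partial>P)"
  have m1: "(\<lambda>\<omega>. (tX \<omega> - q)^2) \<in> borel_measurable P" by measurable
  have m2: "(\<lambda>\<omega>. (1 - 2*q) * tX \<omega> + q^2) \<in> borel_measurable P" by measurable
  have ae: "AE \<omega> in P. (tX \<omega> - q)^2 = (1 - 2*q) * tX \<omega> + q^2"
    using AE01 by eventually_elim (auto simp: sq01)
  have "var_X P = (\<integral>\<omega>. (1 - 2*q) * tX \<omega> + q^2 \<partial>P)"
    unfolding var_X_def q_def[symmetric] by (rule integral_cong_AE[OF m1 m2 ae])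
  also have "\<dots> = (1 - 2*q) * q + q^2"
    using intX by (simp add: q_def PP.prob_space)
  finally show ?thesis unfolding q_def[symmetric] by (simp add: power2_eq_square algebra_simps)
qed
end



definition gmap :: "('n \<Rightarrow> real) \<Rightarrow> ('n \<Rightarrow> real) \<Rightarrow> real \<times> real \<times> 'n \<Rightarrow> real \<times> real \<times> 'n" where
  "gmap y1 y0 \<omega> = (tX \<omega>, if tX \<omega> = 1 then y1 (tN \<omega>) else y0 (tN \<omega>), tN \<omega>)"

lemma gmap_simps: "tX (gmap y1 y0 \<omega>) = tX \<omega>" "tN (gmap y1 y0 \<omega>) = tN \<omega>"
  "tY (gmap y1 y0 \<omega>) = (if tX \<omega> = 1 then y1 (tN \<omega>) else y0 (tN \<omega>))"
  by (simp_all add: gmap_def tX_def tY_def tN_def)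

lemma gmap_vimage: "gmap y1 y0 -` As x n = As x n" "gmap y1 y0 -` Cs n = Cs n"
  by (auto simp: As_def Cs_def gmap_simps)

context
  fixes P :: "(real \<times> real \<times> 'n::finite) measure" and lo hi :: real and y1 y0 :: "'n \<Rightarrow> real"
  assumes V: "valid_triple P lo hi"
begin

interpretation PP: prob_space P by (rule PS[OF V])

lemma yfun_eq: "(\<lambda>\<omega>. if tX \<omega> = 1 then y1 (tN \<omega>) else y0 (tN \<omega>)) =
   (\<lambda>\<omega>. indicator Q1s \<omega> * y1 (tN \<omega>) + (1 - indicator Q1s \<omega>) * y0 (tN \<omega>))"
  by (auto simp: Q1s_def indicator_def fun_eq_iff)

lemma yfun_meas: "(\<lambda>\<omega>. if tX \<omega> = 1 then y1 (tN \<omega>) else y0 (tN \<omega>)) \<in> borel_measurable P"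
  unfolding yfun_eq
  by (intro borel_measurable_add borel_measurable_times borel_measurable_diff borel_measurable_const
        borel_measurable_indicator Q1P[OF V] FNP[OF V])

lemma gm: "gmap y1 y0 \<in> measurable P M0"
proof -
  have "(\<lambda>\<omega>. (tX \<omega>, (if tX \<omega> = 1 then y1 (tN \<omega>) else y0 (tN \<omega>), tN \<omega>))) \<in> measurable P M0"
    by (intro measurable_Pair tXP[OF V] tNP[OF V] yfun_meas)
  thus ?thesis by (simp add: gmap_def[abs_def])
qed

abbreviation "QQ \<equiv> distr P M0 (gmap y1 y0)"

lemma QI: assumes A: "A \<in> sets M0" and f: "f \<in> borel_measurable M0"
  shows "(LINT \<omega>:A|QQ. f \<omega>) = (LINT \<omega>:(gmap y1 y0 -` A)|P. (f (gmap y1 y0 \<omega>)::real))"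
proof -
  have m: "(\<lambda>\<omega>. indicator A \<omega> * f \<omega>) \<in> borel_measurable M0"
    by (intro borel_measurable_times borel_measurable_indicator A f)
  show ?thesis
    unfolding set_lebesgue_integral_def real_scaleR_def integral_distr[OF gm m] indicator_vimage ..
qed

lemma QM: "A \<in> sets M0 \<Longrightarrow> measure QQ A = measure P (gmap y1 y0 -` A)"
  using measure_distr[OF gm, of A] by (simp add: space_P[OF V])

lemma intYg: "integrable P (\<lambda>\<omega>. tY (gmap y1 y0 \<omega>))"
proof -
  define B where "B = (\<Sum>n\<in>UNIV. \<bar>y1 n\<bar>) + (\<Sum>n\<in>UNIV. \<bar>y0 n\<bar>)"
  have s1: "\<bar>y1 m\<bar> \<le> (\<Sum>n\<in>UNIV. \<bar>y1 n\<bar>)" "\<bar>y0 m\<bar> \<le> (\<Sum>n\<in>UNIV. \<bar>y0 n\<bar>)" for m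
    by (rule member_le_sum, auto)+
  have s2: "0 \<le> (\<Sum>n\<in>UNIV. \<bar>y1 n\<bar>)" "0 \<le> (\<Sum>n\<in>UNIV. \<bar>y0 n\<bar>)"
    by (rule sum_nonneg, auto)+
  have b: "\<bar>if tX \<omega> = 1 then y1 (tN \<omega>) else y0 (tN \<omega>)\<bar> \<le> B" for \<omega>
    using s1[of "tN \<omega>"] s2 unfolding B_def by auto
  show ?thesis unfolding gmap_simps
    by (rule PP.integrable_const_bound[where B=B]) (use b yfun_meas in auto)
qed

lemma QI1: "(LINT \<omega>:As 1 n|QQ. tY \<omega>) = y1 n * measure P (As 1 n)"
proof -
  have "(LINT \<omega>:As 1 n|QQ. tY \<omega>) = (LINT \<omega>:As 1 n|P. tY (gmap y1 y0 \<omega>))"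
    using QI[OF As_sets tY_meas] unfolding gmap_vimage .
  also have "\<dots> = (LINT \<omega>:As 1 n|P. y1 n)"
    by (rule set_lebesgue_integral_cong[OF AsP[OF V]]) (auto simp: As_def gmap_simps)
  also have "\<dots> = y1 n * measure P (As 1 n)" by (rule set_const[OF V AsP[OF V]])
  finally show ?thesis .
qed

lemma QI0: "(LINT \<omega>:As 0 n|QQ. tY \<omega>) = y0 n * measure P (As 0 n)"
proof -
  have "(LINT \<omega>:As 0 n|QQ. tY \<omega>) = (LINT \<omega>:As 0 n|P. tY (gmap y1 y0 \<omega>))"
    using QI[OF As_sets tY_meas] unfolding gmap_vimage .
  also have "\<dots> = (LINT \<omega>:As 0 n|P. y0 n)"
    by (rule set_lebesgue_integral_cong[OF AsP[OF V]]) (auto simp: As_def gmap_simps)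
  also have "\<dots> = y0 n * measure P (As 0 n)" by (rule set_const[OF V AsP[OF V]])
  finally show ?thesis .
qed

lemma QMA: "measure QQ (As x n) = measure P (As x n)"
  using QM[OF As_sets] unfolding gmap_vimage .

lemma QMC: "measure QQ (Cs n) = measure P (Cs n)"
  using QM[OF Cs_sets] unfolding gmap_vimage .

lemma QX: "(LINT \<omega>:Cs n|QQ. tX \<omega>) = (LINT \<omega>:Cs n|P. tX \<omega>)"
  using QI[OF Cs_sets tX_meas] unfolding gmap_vimage gmap_simps .

lemma Qvalid:
  assumes r1: "\<And>n. measure P (As 1 n) > 0 \<Longrightarrow> y1 n \<in> {lo..hi}"
     and r0: "\<And>n. measure P (As 0 n) > 0 \<Longrightarrow> y0 n \<in> {lo..hi}"
  shows "valid_triple QQ lo hi"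
  unfolding valid_triple_def
proof (intro conjI ballI allI impI)
  show "prob_space QQ" by (rule PP.prob_space_distr[OF gm])
  show "sets QQ = sets M0" by simp
  have c: "{x \<in> space M0. tX x \<in> {0, 1}} \<in> sets M0"
  proof -
    have "{x \<in> space M0. tX x \<in> {0, 1}} = tX -` {0,1} \<inter> space M0" by auto
    moreover have "{0,1} \<in> sets (borel::real measure)" by (simp add: borel_closed finite_imp_closed)
    ultimately show ?thesis using measurable_sets[OF tX_meas, of "{0,1}"] by metis
  qed
  show "AE \<omega> in QQ. tX \<omega> \<in> {0, 1}"
    unfolding AE_distr_iff[OF gm c] gmap_simps by (rule AE01[OF V])
  show "integrable QQ tY"
    using integrable_distr_eq[OF gm tY_meas] intYg by simp
  fix x :: real and n
  assume x: "x \<in> {0,1}" and pos: "0 < measure QQ {\<omega>. tX \<omega> = x \<and> tN \<omega> = n}"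
  have pos': "measure P (As x n) > 0" using pos QMA unfolding As_def by simp
  show "cond_ev QQ tY {\<omega>. tX \<omega> = x \<and> tN \<omega> = n} \<in> {lo..hi}"
  proof (cases "x = 1")
    case True
    then show ?thesis using pos' r1[of n] QI1[of n] QMA[of 1 n] by (simp add: cond_ev_def As_def[symmetric])
  next
    case False
    hence "x = 0" using x by simp
    then show ?thesis using pos' r0[of n] QI0[of n] QMA[of 0 n] by (simp add: cond_ev_def As_def[symmetric])
  qed
qed

end



lemma cell_bound:
  fixes p X Y a b I1 I0 lo hi :: real
  assumes "p \<ge> 0" "p*X = a" "p*Y = I1 + I0" "p = a + b" "lo*a \<le> I1" "I1 \<le> hi*a" "lo*b \<le> I0" "I0 \<le> hi*b"
  shows "I1 \<le> p * min (Y - lo*(1-X)) (hi*X)" "I0 \<le> p * min (Y - lo*X) (hi*(1-X))"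
proof -
  have e1: "p*(Y - lo*(1-X)) = I1 + I0 - lo*b"
  proof -
    have "p*(Y - lo*(1-X)) = p*Y - lo*p + lo*(p*X)" by (simp add: algebra_simps)
    also have "\<dots> = I1 + I0 - lo*(a+b) + lo*a" using assms(2,3,4) by simp
    finally show ?thesis by (simp add: algebra_simps)
  qed
  have e2: "p*(hi*X) = hi*a" using assms(2) by (simp add: algebra_simps)
  have e3: "p*(Y - lo*X) = I1 + I0 - lo*a"
  proof -
    have "p*(Y - lo*X) = p*Y - lo*(p*X)" by (simp add: algebra_simps)
    thus ?thesis using assms(2,3) by simp
  qed
  have e4: "p*(hi*(1-X)) = hi*b"
  proof -
    have "p*(hi*(1-X)) = hi*p - hi*(p*X)" by (simp add: algebra_simps)
    also have "\<dots> = hi*(a+b) - hi*a" using assms(2,4) by simp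
    finally show ?thesis by (simp add: algebra_simps)
  qed
  have m1: "p * min (Y - lo*(1-X)) (hi*X) = min (p*(Y - lo*(1-X))) (p*(hi*X))"
    using assms(1) by (simp add: min_mult_distrib_left)
  have m2: "p * min (Y - lo*X) (hi*(1-X)) = min (p*(Y - lo*X)) (p*(hi*(1-X)))"
    using assms(1) by (simp add: min_mult_distrib_left)
  show "I1 \<le> p * min (Y - lo*(1-X)) (hi*X)"
    unfolding m1 e1 e2 using assms(6,7) by simp
  show "I0 \<le> p * min (Y - lo*X) (hi*(1-X))"
    unfolding m2 e3 e4 using assms(5,8) by simp
qed

lemma cell_constr:
  fixes p X Y a b lo hi t L U c :: real
  assumes lh: "lo \<le> hi" and t: "0 \<le> t" "t \<le> 1" and p: "p \<ge> 0" and ab: "a \<ge> 0" "b \<ge> 0"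
    and pX: "p*X = a" and pab: "p = a + b" and Yr: "p > 0 \<Longrightarrow> lo \<le> Y \<and> Y \<le> hi"
    and L_def: "L = Y - min (Y - lo*X) (hi*(1-X))" and U_def: "U = min (Y - lo*(1-X)) (hi*X)"
    and c_def: "c = L + t*(U-L)"
  shows "a * (if X = 0 then lo else c/X) = p*c"
    "b * (if X = 1 then lo else (Y - c)/(1-X)) = p*(Y-c)"
    "a > 0 \<Longrightarrow> lo \<le> (if X = 0 then lo else c/X) \<and> (if X = 0 then lo else c/X) \<le> hi"
    "b > 0 \<Longrightarrow> lo \<le> (if X = 1 then lo else (Y - c)/(1-X)) \<and> (if X = 1 then lo else (Y - c)/(1-X)) \<le> hi"
proof -
  have all: "a * (if X = 0 then lo else c/X) = p*c \<and>
       b * (if X = 1 then lo else (Y - c)/(1-X)) = p*(Y-c) \<and>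
       (a > 0 \<longrightarrow> lo \<le> (if X = 0 then lo else c/X) \<and> (if X = 0 then lo else c/X) \<le> hi) \<and>
       (b > 0 \<longrightarrow> lo \<le> (if X = 1 then lo else (Y - c)/(1-X)) \<and> (if X = 1 then lo else (Y - c)/(1-X)) \<le> hi)"
  proof (cases "p = 0")
    case True
    hence "a = 0" "b = 0" using ab pab by linarith+
    then show ?thesis using True by simp
  next
    case False
    hence p2: "p > 0" using p by linarith
    have Y: "lo \<le> Y" "Y \<le> hi" using Yr p2 by auto
    have "0 \<le> p*X" using pX ab by simp
    hence X0: "X \<ge> 0" using p2 by (simp add: zero_le_mult_iff)
    have "p*(1-X) = b" using pX pab by (simp add: algebra_simps)
    hence "0 \<le> p*(1-X)" using ab by simp
    hence X1: "X \<le> 1" using p2 by (simp add: zero_le_mult_iff)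
    have m1: "lo*X \<le> hi*X" "lo*(1-X) \<le> hi*(1-X)" using lh X0 X1 by (auto intro: mult_right_mono)
    have s: "lo*X + lo*(1-X) = lo" "hi*X + hi*(1-X) = hi" by (simp_all add: algebra_simps)
    have L1: "L \<ge> lo*X" "L \<ge> Y - hi*(1-X)" unfolding L_def by auto
    have L2: "L = lo*X \<or> L = Y - hi*(1-X)" unfolding L_def by (auto simp: min_def)
    have U1: "U \<le> Y - lo*(1-X)" "U \<le> hi*X" unfolding U_def by auto
    have U2: "U = Y - lo*(1-X) \<or> U = hi*X" unfolding U_def by (auto simp: min_def)
    have LU: "L \<le> U" using L2 U2 L1 U1 m1 s Y by linarith
    have tc1: "0 \<le> t*(U-L)" using t LU by simp
    have tc2: "t*(U-L) \<le> U - L" using t LU by (simp add: mult_left_le_one_le)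
    have c1: "L \<le> c" "c \<le> U" unfolding c_def using tc1 tc2 by linarith+
    have A: "a * (if X = 0 then lo else c/X) = p*c"
    proof (cases "X = 0")
      case True
      have "L = 0" "U = 0" using Y True unfolding L_def U_def by auto
      then show ?thesis using True pX by (simp add: c_def)
    next
      case False
      then show ?thesis using pX[symmetric] by simp
    qed
    have B: "b * (if X = 1 then lo else (Y - c)/(1-X)) = p*(Y-c)"
    proof (cases "X = 1")
      case True
      have "L = Y" "U = Y" using Y True unfolding L_def U_def by auto
      then show ?thesis using True pX pab by (simp add: c_def)
    next
      case False
      hence "1 - X \<noteq> 0" by simp
      then show ?thesis using \<open>p*(1-X) = b\<close>[symmetric] by simp
    qed
    have C: "a > 0 \<Longrightarrow> lo \<le> (if X = 0 then lo else c/X) \<and> (if X = 0 then lo else c/X) \<le> hi"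
    proof -
      assume "a > 0"
      hence "0 < p*X" using pX by simp
      hence Xp: "X > 0" using p2 by (simp add: zero_less_mult_iff)
      have "lo*X \<le> c" "c \<le> hi*X" using c1 L1 U1 by linarith+
      thus ?thesis using Xp by (simp add: le_divide_eq divide_le_eq mult.commute)
    qed
    have D: "b > 0 \<Longrightarrow> lo \<le> (if X = 1 then lo else (Y - c)/(1-X)) \<and> (if X = 1 then lo else (Y - c)/(1-X)) \<le> hi"
    proof -
      assume "b > 0"
      hence "0 < p*(1-X)" using \<open>p*(1-X) = b\<close> by simp
      hence Xp: "1 - X > 0" using p2 by (simp add: zero_less_mult_iff)
      have "lo*(1-X) \<le> Y - c" "Y - c \<le> hi*(1-X)" using c1 L1 U1 by linarith+
      thus ?thesis using Xp by (simp add: le_divide_eq divide_le_eq mult.commute)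
    qed
    show ?thesis using A B C D by blast
  qed
  show "a * (if X = 0 then lo else c/X) = p*c"
       "b * (if X = 1 then lo else (Y - c)/(1-X)) = p*(Y-c)"
       "a > 0 \<Longrightarrow> lo \<le> (if X = 0 then lo else c/X) \<and> (if X = 0 then lo else c/X) \<le> hi"
       "b > 0 \<Longrightarrow> lo \<le> (if X = 1 then lo else (Y - c)/(1-X)) \<and> (if X = 1 then lo else (Y - c)/(1-X)) \<le> hi"
    using all by blast+
qed



theorem proposition3:
  fixes P :: "(real \<times> real \<times> 'n::finite) measure" and lo hi :: real
  assumes "lo \<le> hi"
    and "valid_triple P lo hi"
    and "\<exists>n. pN P n > 0 \<and> XN P n \<in> {0<..<1}"
  shows "Dpar P \<in> {D_MOB_minus P lo hi .. D_MOB_plus P lo hi}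
    \<and> (\<forall>d \<in> {D_MOB_minus P lo hi .. D_MOB_plus P lo hi}.
          \<exists>Q :: (real \<times> real \<times> 'n) measure.
             valid_triple Q lo hi \<and> same_obs P Q \<and> Dpar Q = d)"
proof -
  note V = assms(2)
  interpret PP: prob_space P by (rule PS[OF V])
  define a where "a n = measure P (As 1 n)" for n
  define b where "b n = measure P (As 0 n)" for n
  define p where "p n = measure P (Cs n)" for n
  define I1 where "I1 n = (LINT \<omega>:As 1 n|P. tY \<omega>)" for n
  define I0 where "I0 n = (LINT \<omega>:As 0 n|P. tY \<omega>)" for n
  define X where "X n = XN P n" for n
  define Y where "Y n = YN P n" for n
  define q where "q = (\<Sum>n\<in>UNIV. a n)"
  define S1 where "S1 = (\<Sum>n\<in>UNIV. I1 n)"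
  define S0 where "S0 = (\<Sum>n\<in>UNIV. I0 n)"
  define EY where "EY = (\<integral>\<omega>. tY \<omega> \<partial>P)"
  define v where "v = var_X P"
  define U where "U n = min (Y n - lo * (1 - X n)) (hi * X n)" for n
  define M where "M n = min (Y n - lo * X n) (hi * (1 - X n))" for n
  have Fa: "p n * X n = a n" for n using F1[OF V] by (simp add: p_def a_def X_def)
  have Fy: "p n * Y n = I1 n + I0 n" for n using F2[OF V] by (simp add: p_def I1_def I0_def Y_def)
  have Fp: "p n = a n + b n" for n using F3[OF V] by (simp add: p_def a_def b_def)
  have b1: "lo * a n \<le> I1 n \<and> I1 n \<le> hi * a n" for n using F9[OF V, of 1 n] by (simp add: a_def I1_def)
  have b0: "lo * b n \<le> I0 n \<and> I0 n \<le> hi * b n" for n using F9[OF V, of 0 n] by (simp add: b_def I0_def)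
  have nn: "a n \<ge> 0" "b n \<ge> 0" "p n \<ge> 0" for n by (simp_all add: a_def b_def p_def)
  have EX: "(\<integral>\<omega>. tX \<omega> \<partial>P) = q" using F4[OF V] by (simp add: q_def a_def)
  have EYs: "EY = S1 + S0" using F5[OF V] by (simp add: EY_def S1_def S0_def I1_def I0_def)
  have vq: "v = q - q^2" using F6[OF V] EX by (simp add: v_def)
  have sp: "(\<Sum>n\<in>UNIV. p n) = 1" using sumP[OF V] by (simp add: p_def)
  have sb: "(\<Sum>n\<in>UNIV. b n) = 1 - q"
  proof -
    have "(\<Sum>n\<in>UNIV. p n) = q + (\<Sum>n\<in>UNIV. b n)" unfolding Fp q_def by (simp add: sum.distrib)
    thus ?thesis using sp by simp
  qed
  have Dp: "Dpar P = S1/q - S0/(1-q)"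
    using Dpar_eq[OF V] sb by (simp add: S1_def S0_def I1_def I0_def q_def a_def b_def)
  obtain n0 where n0: "p n0 > 0" "X n0 \<in> {0<..<1}" using assms(3) by (auto simp: p_def X_def pN_def Cs_def)
  have a0: "a n0 > 0" using n0 Fa[of n0] by (metis greaterThanLessThan_iff mult_pos_pos)
  have b0': "b n0 > 0"
  proof -
    have "b n0 = p n0 * (1 - X n0)" using Fa[of n0] Fp[of n0] by (simp add: algebra_simps)
    thus ?thesis using n0 by simp
  qed
  have qpos: "q > 0"
  proof -
    have "a n0 \<le> q" unfolding q_def by (rule member_le_sum) (auto intro: nn)
    thus ?thesis using a0 by simp
  qed
  have q1: "q < 1"
  proof -
    have "b n0 \<le> 1 - q" unfolding sb[symmetric] by (rule member_le_sum) (auto intro: nn)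
    thus ?thesis using b0' by simp
  qed
  have vpos: "v > 0" unfolding vq using qpos q1 by (simp add: power2_eq_square algebra_simps mult_pos_pos)
  have vq2: "v = q * (1 - q)" unfolding vq by (simp add: power2_eq_square algebra_simps)
  have Dp2: "Dpar P = (S1 - q*EY)/v"
    unfolding Dp vq2 EYs using qpos q1 by (simp add: field_simps)
  have Dplus: "D_MOB_plus P lo hi = ((\<Sum>n\<in>UNIV. p n * U n) - q*EY)/v"
    unfolding D_MOB_plus_def EX EY_def[symmetric] v_def[symmetric]
    using F7[OF V, of "\<lambda>n. min (YN P n - lo * (1 - XN P n)) (hi * XN P n)"]
    by (simp add: p_def U_def X_def Y_def)
  have Dminus: "D_MOB_minus P lo hi = (EY*(1-q) - (\<Sum>n\<in>UNIV. p n * M n))/v"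
    unfolding D_MOB_minus_def EX EY_def[symmetric] v_def[symmetric]
    using F7[OF V, of "\<lambda>n. min (YN P n - lo * XN P n) (hi * (1 - XN P n))"]
    by (simp add: p_def M_def X_def Y_def)
  have cb: "I1 n \<le> p n * U n \<and> I0 n \<le> p n * M n" for n
    using cell_bound[OF nn(3)[of n] Fa[of n] Fy[of n] Fp[of n]] b1[of n] b0[of n] unfolding U_def M_def by simp
  have SU: "S1 \<le> (\<Sum>n\<in>UNIV. p n * U n)" unfolding S1_def by (rule sum_mono) (use cb in auto)
  have SM: "S0 \<le> (\<Sum>n\<in>UNIV. p n * M n)" unfolding S0_def by (rule sum_mono) (use cb in auto)
  have EYq: "EY*(1-q) = EY - q*EY" by (simp add: algebra_simps)
  have part1: "Dpar P \<in> {D_MOB_minus P lo hi .. D_MOB_plus P lo hi}"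
  proof -
    have "D_MOB_minus P lo hi \<le> Dpar P"
      unfolding Dminus Dp2 by (rule divide_right_mono) (use EYq EYs SM vpos in auto)
    moreover have "Dpar P \<le> D_MOB_plus P lo hi"
      unfolding Dplus Dp2 by (rule divide_right_mono) (use SU vpos in auto)
    ultimately show ?thesis by simp
  qed
  have part2: "\<forall>d \<in> {D_MOB_minus P lo hi .. D_MOB_plus P lo hi}.
          \<exists>Q :: (real \<times> real \<times> 'n) measure. valid_triple Q lo hi \<and> same_obs P Q \<and> Dpar Q = d"
  proof
    fix d assume d: "d \<in> {D_MOB_minus P lo hi .. D_MOB_plus P lo hi}"
    define L where "L n = Y n - M n" for n
    define SL where "SL = (\<Sum>n\<in>UNIV. p n * L n)"
    define SUU where "SUU = (\<Sum>n\<in>UNIV. p n * U n)"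
    have sY: "(\<Sum>n\<in>UNIV. p n * Y n) = EY" unfolding EYs S1_def S0_def Fy by (simp add: sum.distrib)
    have SLe: "SL = EY - (\<Sum>n\<in>UNIV. p n * M n)"
      unfolding SL_def L_def by (simp add: right_diff_distrib sum_subtractf sY)
    define Tg where "Tg = d * v + q*EY"
    have T1: "SL \<le> Tg"
    proof -
      have "D_MOB_minus P lo hi = (SL - q*EY)/v" unfolding Dminus SLe EYq by simp
      hence "(SL - q*EY)/v \<le> d" using d by simp
      hence "SL - q*EY \<le> d * v" using vpos by (simp add: pos_divide_le_eq)
      thus ?thesis by (simp add: Tg_def)
    qed
    have T2: "Tg \<le> SUU"
    proof -
      have "d \<le> (SUU - q*EY)/v" using d Dplus SUU_def by simp
      hence "d * v \<le> SUU - q*EY" using vpos by (simp add: pos_le_divide_eq)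
      thus ?thesis by (simp add: Tg_def)
    qed
    define t where "t = (if SUU = SL then 0 else (Tg - SL)/(SUU - SL))"
    have t01: "0 \<le> t" "t \<le> 1"
    proof -
      have "0 \<le> t \<and> t \<le> 1"
      proof (cases "SUU = SL")
        case True then show ?thesis by (simp add: t_def)
      next
        case False
        hence "SL < SUU" using T1 T2 by linarith
        then show ?thesis using T1 T2 False by (simp add: t_def divide_le_eq)
      qed
      thus "0 \<le> t" "t \<le> 1" by auto
    qed
    have tT: "SL + t*(SUU - SL) = Tg"
    proof (cases "SUU = SL")
      case True then show ?thesis using T1 T2 by (simp add: t_def)
    next
      case False
      hence "SUU - SL \<noteq> 0" by simp
      then show ?thesis by (simp add: t_def)
    qed
    define c where "c n = L n + t*(U n - L n)" for n
    have sc: "(\<Sum>n\<in>UNIV. p n * c n) = Tg"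
    proof -
      have "p n * c n = p n * L n + t*(p n * U n - p n * L n)" for n
        by (simp add: c_def algebra_simps)
      hence "(\<Sum>n\<in>UNIV. p n * c n) = SL + t*(SUU - SL)"
        by (simp add: SL_def SUU_def sum.distrib sum_distrib_left sum_subtractf right_diff_distrib)
      thus ?thesis using tT by simp
    qed
    define y1 where "y1 n = (if X n = 0 then lo else c n / X n)" for n
    define y0 where "y0 n = (if X n = 1 then lo else (Y n - c n)/(1 - X n))" for n
    have Yr: "p n > 0 \<Longrightarrow> lo \<le> Y n \<and> Y n \<le> hi" for n
    proof -
      assume pp: "p n > 0"
      have e: "p n * lo = lo * a n + lo * b n" "p n * hi = hi * a n + hi * b n" by (simp_all add: Fp algebra_simps)
      have "p n * lo \<le> p n * Y n" "p n * Y n \<le> p n * hi" using e Fy[of n] b1[of n] b0[of n] by linarith+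
      thus ?thesis using pp by (simp add: mult_le_cancel_left_pos)
    qed
    have Ld: "L n = Y n - min (Y n - lo * X n) (hi * (1 - X n))" for n by (simp add: L_def M_def)
    have cc: "a n * y1 n = p n * c n" "b n * y0 n = p n * (Y n - c n)"
      "a n > 0 \<Longrightarrow> lo \<le> y1 n \<and> y1 n \<le> hi" "b n > 0 \<Longrightarrow> lo \<le> y0 n \<and> y0 n \<le> hi" for n
      using cell_constr[OF assms(1) t01(1) t01(2) nn(3)[of n] nn(1)[of n] nn(2)[of n] Fa[of n] Fp[of n] Yr[of n]
          Ld[of n] U_def[of n] c_def[of n]]
      unfolding y1_def y0_def by auto
    define Q where "Q = distr P M0 (gmap y1 y0)"
    have validQ: "valid_triple Q lo hi" unfolding Q_def
      by (rule Qvalid[OF V]) (use cc in \<open>auto simp: a_def b_def\<close>)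
    have QI1': "(LINT \<omega>:As 1 n|Q. tY \<omega>) = y1 n * a n" for n
      unfolding Q_def a_def by (rule QI1[OF V])
    have QI0': "(LINT \<omega>:As 0 n|Q. tY \<omega>) = y0 n * b n" for n
      unfolding Q_def b_def by (rule QI0[OF V])
    have QMA': "measure Q (As x n) = measure P (As x n)" for x n
      unfolding Q_def by (rule QMA[OF V])
    have QMC': "measure Q (Cs n) = p n" for n
      unfolding Q_def p_def by (rule QMC[OF V])
    have QX': "(LINT \<omega>:Cs n|Q. tX \<omega>) = (LINT \<omega>:Cs n|P. tX \<omega>)" for n
      unfolding Q_def by (rule QX[OF V])
    have DQ: "Dpar Q = d"
    proof -
      have "Dpar Q = (\<Sum>n\<in>UNIV. p n * c n) / q - (\<Sum>n\<in>UNIV. p n * (Y n - c n)) / (1 - q)"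
        unfolding Dpar_eq[OF validQ] QI1' QI0' QMA' using cc sb
        by (simp add: q_def mult.commute[of "y1 _"] mult.commute[of "y0 _"] a_def[symmetric] b_def[symmetric])
      also have "(\<Sum>n\<in>UNIV. p n * (Y n - c n)) = EY - Tg"
        using sY sc by (simp add: right_diff_distrib sum_subtractf)
      also have "(\<Sum>n\<in>UNIV. p n * c n) = Tg" by (rule sc)
      also have "Tg / q - (EY - Tg) / (1 - q) = (Tg - q*EY)/v"
        unfolding vq2 using qpos q1 by (simp add: field_simps)
      also have "\<dots> = d" unfolding Tg_def using vpos by simp
      finally show ?thesis .
    qed
    have SO: "same_obs P Q"
      unfolding same_obs_def
    proof
      fix n :: 'n
      have Ce: "{\<omega>. tN \<omega> = n} = Cs n" by (simp add: Cs_def)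
      have pe: "pN P n = pN Q n" unfolding pN_def Ce QMC' p_def ..
      have xe: "XN P n = XN Q n" unfolding XN_def cond_ev_def Ce QX' QMC' p_def ..
      have yQ: "p n * YN Q n = p n * Y n"
      proof -
        have "p n * YN Q n = y1 n * a n + y0 n * b n"
          using F2[OF validQ, of n] QMC'[of n] QI1'[of n] QI0'[of n] by simp
        also have "\<dots> = p n * Y n" using cc(1)[of n] cc(2)[of n] by (simp add: algebra_simps)
        finally show ?thesis .
      qed
      have ye: "YN P n = YN Q n"
      proof (cases "p n = 0")
        case True
        then show ?thesis unfolding YN_def cond_ev_def Ce QMC' using True by (simp add: p_def)
      next
        case False
        then show ?thesis using yQ by (simp add: Y_def)
      qed
      show "pN P n = pN Q n \<and> XN P n = XN Q n \<and> YN P n = YN Q n" using pe xe ye by simp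
    qed
    show "\<exists>Q :: (real \<times> real \<times> 'n) measure. valid_triple Q lo hi \<and> same_obs P Q \<and> Dpar Q = d"
      using validQ SO DQ by blast
  qed
  show ?thesis using part1 part2 by simp
qed

end
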